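(* Let $(G,\sigma)$ be a finite connected signed graph satisfying $CD^{\sigma}(K,N)$ for some $K\in\mathbb{R}$, $N\in(0,\infty]$, and let $f:V\to\mathbb{R}$ be an eigenfunction of $\Delta^{\sigma}$ to a nonzero eigenvalue $\lambda^{\sigma}$. Then for all $x\in V$ and all $\varepsilon>0$, \[ |\nabla^{\sigma}f|^{2}(x)\leq\left(\left((2+\varepsilon)^{2}-\frac{4}{N}\right)\frac{\lambda^{\sigma}}{\varepsilon}-\left(\frac{4}{\varepsilon}+2\right)K\right)\cdot \max_{z\in V}f^{2}(z), \] with the convention $\frac1N=0$ if $N=\infty$.
   Context: $G=(V,E)$ is a finite simple connected graph with degrees $d_x$; $\sigma:E\to\{\pm1\}$, $\sigma_{xy}=\sigma(\{x,y\})$. Signed Laplacian $\Delta^{\sigma}f(x)=\frac{1}{d_x}\sum_{y\sim x}(\sigma_{xy}f(y)-f(x))$; $\Delta$ is the case $\sigma\equiv+1$. Eigenfunction to $\lambda^\sigma$: nonzero $f$ with $-\Delta^\sigma f=\lambda^\sigma f$. $\Gamma^{\sigma}(f,g)=\frac12\{\Delta(fg)-g\Delta^{\sigma}f-f\Delta^{\sigma}g\}$, $\Gamma_2^{\sigma}(f,g)=\frac12\{\Delta\Gamma^{\sigma}(f,g)-\Gamma^{\sigma}(g,\Delta^{\sigma}f)-\Gamma^{\sigma}(f,\Delta^{\sigma}g)\}$; $|\nabla^{\sigma}f|^2(x)=\frac{1}{d_x}\sum_{y\sim x}(\sigma_{xy}f(y)-f(x))^2$. $CD^{\sigma}(K,N)$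 means $\Gamma_2^{\sigma}(f,f)(x)\ge\frac1N(\Delta^\sigma f)^2(x)+K\Gamma^\sigma(f,f)(x)$ for all $f$ and all $x\in V$. *)

theory Defs
  imports "HOL-Analysis.Analysis" "HOL-Library.Extended_Real"
begin

definition simple_graph :: "'a set \<Rightarrow> ('a \<Rightarrow> 'a \<Rightarrow> bool) \<Rightarrow> bool" where
  "simple_graph V E \<longleftrightarrow> finite V \<and> V \<noteq> {} \<and>
     (\<forall>x y. E x y \<longrightarrow> x \<in> V \<and> y \<in> V) \<and>
     (\<forall>x y. E x y \<longrightarrow> E y x) \<and> (\<forall>x. \<not> E x x)"

definition graph_connected :: "'a set \<Rightarrow> ('a \<Rightarrow> 'a \<Rightarrow> bool) \<Rightarrow> bool" where
  "graph_connected V E \<longleftrightarrow> (\<forall>x\<in>V. \<forall>y\<in>V. E\<^sup>*\<^sup>* x y)"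

definition signature :: "('a \<Rightarrow> 'a \<Rightarrow> bool) \<Rightarrow> ('a \<Rightarrow> 'a \<Rightarrow> real) \<Rightarrow> bool" where
  "signature E \<sigma> \<longleftrightarrow> (\<forall>x y. E x y \<longrightarrow> \<sigma> x y = \<sigma> y x \<and> (\<sigma> x y = 1 \<or> \<sigma> x y = -1))"

definition nbrs :: "'a set \<Rightarrow> ('a \<Rightarrow> 'a \<Rightarrow> bool) \<Rightarrow> 'a \<Rightarrow> 'a set" where
  "nbrs V E x = {y\<in>V. E x y}"

definition deg :: "'a set \<Rightarrow> ('a \<Rightarrow> 'a \<Rightarrow> bool) \<Rightarrow> 'a \<Rightarrow> real" where
  "deg V E x = real (card (nbrs V E x))"

definition slap :: "'a set \<Rightarrow> ('a \<Rightarrow> 'a \<Rightarrow> bool) \<Rightarrow> ('a \<Rightarrow> 'a \<Rightarrow> real) \<Rightarrow> ('a \<Rightarrow> real) \<Rightarrow> 'a \<Rightarrow> real" where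
  "slap V E \<sigma> f x = (1 / deg V E x) * (\<Sum>y\<in>nbrs V E x. \<sigma> x y * f y - f x)"

definition lap :: "'a set \<Rightarrow> ('a \<Rightarrow> 'a \<Rightarrow> bool) \<Rightarrow> ('a \<Rightarrow> real) \<Rightarrow> 'a \<Rightarrow> real" where
  "lap V E f x = slap V E (\<lambda>_ _. 1) f x"

definition sGamma :: "'a set \<Rightarrow> ('a \<Rightarrow> 'a \<Rightarrow> bool) \<Rightarrow> ('a \<Rightarrow> 'a \<Rightarrow> real) \<Rightarrow> ('a \<Rightarrow> real) \<Rightarrow> ('a \<Rightarrow> real) \<Rightarrow> 'a \<Rightarrow> real" where
  "sGamma V E \<sigma> f g x = (1/2) * (lap V E (\<lambda>z. f z * g z) x - g x * slap V E \<sigma> f x - f x * slap V E \<sigma> g x)"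

definition sGamma2 :: "'a set \<Rightarrow> ('a \<Rightarrow> 'a \<Rightarrow> bool) \<Rightarrow> ('a \<Rightarrow> 'a \<Rightarrow> real) \<Rightarrow> ('a \<Rightarrow> real) \<Rightarrow> ('a \<Rightarrow> real) \<Rightarrow> 'a \<Rightarrow> real" where
  "sGamma2 V E \<sigma> f g x = (1/2) * (lap V E (sGamma V E \<sigma> f g) x
      - sGamma V E \<sigma> g (slap V E \<sigma> f) x - sGamma V E \<sigma> f (slap V E \<sigma> g) x)"

definition sgrad_sq :: "'a set \<Rightarrow> ('a \<Rightarrow> 'a \<Rightarrow> bool) \<Rightarrow> ('a \<Rightarrow> 'a \<Rightarrow> real) \<Rightarrow> ('a \<Rightarrow> real) \<Rightarrow> 'a \<Rightarrow> real" where
  "sgrad_sq V E \<sigma> f x = (1 / deg V E x) * (\<Sum>y\<in>nbrs V E x. (\<sigma> x y * f y - f x)\<^sup>2)"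

definition invN :: "ereal \<Rightarrow> real" where
  "invN N = (if N = \<infinity> then 0 else 1 / real_of_ereal N)"

definition CD_sig :: "'a set \<Rightarrow> ('a \<Rightarrow> 'a \<Rightarrow> bool) \<Rightarrow> ('a \<Rightarrow> 'a \<Rightarrow> real) \<Rightarrow> real \<Rightarrow> ereal \<Rightarrow> bool" where
  "CD_sig V E \<sigma> K N \<longleftrightarrow> (\<forall>f. \<forall>x\<in>V.
     sGamma2 V E \<sigma> f f x \<ge> invN N * (slap V E \<sigma> f x)\<^sup>2 + K * sGamma V E \<sigma> f f x)"

definition s_eigenfun :: "'a set \<Rightarrow> ('a \<Rightarrow> 'a \<Rightarrow> bool) \<Rightarrow> ('a \<Rightarrow> 'a \<Rightarrow> real) \<Rightarrow> ('a \<Rightarrow> real) \<Rightarrow> real \<Rightarrow> bool" where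
  "s_eigenfun V E \<sigma> f lam \<longleftrightarrow> (\<exists>x\<in>V. f x \<noteq> 0) \<and> (\<forall>x\<in>V. - slap V E \<sigma> f x = lam * f x)"

end

theory Submission
  imports Defs
begin

lemma nbrs_fin:
  assumes "simple_graph V E" shows "finite (nbrs V E x)" "nbrs V E x \<subseteq> V"
  using assms by (auto simp: simple_graph_def nbrs_def)

lemma deg_nonneg: "deg V E x \<ge> 0"
  by (simp add: deg_def)

lemma deg_mult_slap:
  assumes "simple_graph V E"
  shows "deg V E x * slap V E \<sigma> g x = (\<Sum>y\<in>nbrs V E x. \<sigma> x y * g y - g x)"
proof (cases "deg V E x = 0")
  case True
  then have "nbrs V E x = {}" using nbrs_fin[OF assms] by (simp add: deg_def)
  then show ?thesis using True by simp
next
  case False then show ?thesis by (simp add: slap_def)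
qed

lemma deg_mult_sgrad:
  assumes "simple_graph V E"
  shows "deg V E x * sgrad_sq V E \<sigma> g x = (\<Sum>y\<in>nbrs V E x. (\<sigma> x y * g y - g x)\<^sup>2)"
proof (cases "deg V E x = 0")
  case True
  then have "nbrs V E x = {}" using nbrs_fin[OF assms] by (simp add: deg_def)
  then show ?thesis using True by simp
next
  case False then show ?thesis by (simp add: sgrad_sq_def)
qed

lemma sum_swap_nbrs:
  assumes G: "simple_graph V E"
  shows "(\<Sum>x\<in>V. \<Sum>y\<in>nbrs V E x. g x y) = (\<Sum>x\<in>V. \<Sum>y\<in>nbrs V E x. g y x)"
proof -
  have fin: "finite V" using G by (simp add: simple_graph_def)
  have sym: "\<And>x y. E x y = E y x" using G by (auto simp: simple_graph_def)
  have "(\<Sum>x\<in>V. \<Sum>y\<in>nbrs V E x. g x y) = (\<Sum>x\<in>V. \<Sum>y\<in>V. if E x y then g x y else 0)"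
    unfolding nbrs_def using fin by (simp add: sum.inter_filter)
  also have "\<dots> = (\<Sum>y\<in>V. \<Sum>x\<in>V. if E x y then g x y else 0)"
    by (rule sum.swap)
  also have "\<dots> = (\<Sum>x\<in>V. \<Sum>y\<in>nbrs V E x. g y x)"
    unfolding nbrs_def using fin by (simp add: sum.inter_filter sym)
  finally show ?thesis .
qed

lemma slap_scale: "slap V E \<sigma> (\<lambda>z. a * g z) x = a * slap V E \<sigma> g x"
  by (simp add: slap_def sum_distrib_left algebra_simps)

lemma slap_add: "slap V E \<sigma> (\<lambda>z. g z + h z) x = slap V E \<sigma> g x + slap V E \<sigma> h x"
proof -
  have "(\<Sum>y\<in>nbrs V E x. \<sigma> x y * (g y + h y) - (g x + h x)) =
    (\<Sum>y\<in>nbrs V E x. \<sigma> x y * g y - g x) + (\<Sum>y\<in>nbrs V E x. \<sigma> x y * h y - h x)"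
    by (simp add: sum.distrib[symmetric] algebra_simps)
  then show ?thesis unfolding slap_def by (simp add: distrib_left)
qed

lemma slap_cong:
  assumes "\<forall>y\<in>nbrs V E x. g y = h y" "g x = h x"
  shows "slap V E \<sigma> g x = slap V E \<sigma> h x"
  using assms unfolding slap_def by (auto intro!: sum.cong)

lemma sum_lap_zero:
  assumes G: "simple_graph V E"
  shows "(\<Sum>x\<in>V. deg V E x * lap V E g x) = 0"
proof -
  have "(\<Sum>x\<in>V. deg V E x * lap V E g x) = (\<Sum>x\<in>V. \<Sum>y\<in>nbrs V E x. g y - g x)"
    unfolding lap_def using deg_mult_slap[OF G] by simp
  also have "\<dots> = (\<Sum>x\<in>V. \<Sum>y\<in>nbrs V E x. g y) - (\<Sum>x\<in>V. \<Sum>y\<in>nbrs V E x. g x)"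
    by (simp add: sum_subtractf)
  also have "(\<Sum>x\<in>V. \<Sum>y\<in>nbrs V E x. g y) = (\<Sum>x\<in>V. \<Sum>y\<in>nbrs V E x. g x)"
    using sum_swap_nbrs[OF G, of "\<lambda>x y. g y"] by simp
  finally show ?thesis by simp
qed

lemma sGamma_ff:
  assumes G: "simple_graph V E" and S: "signature E \<sigma>"
  shows "sGamma V E \<sigma> f f x = sgrad_sq V E \<sigma> f x / 2"
proof -
  have "\<forall>y\<in>nbrs V E x. (\<sigma> x y * f y - f x)\<^sup>2 = (f y * f y - f x * f x) - 2 * f x * (\<sigma> x y * f y - f x)"
  proof
    fix y assume "y \<in> nbrs V E x"
    then have "\<sigma> x y = 1 \<or> \<sigma> x y = -1" using S by (auto simp: nbrs_def signature_def)
    then show "(\<sigma> x y * f y - f x)\<^sup>2 = (f y * f y - f x * f x) - 2 * f x * (\<sigma> x y * f y - f x)"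
      by (auto simp: power2_eq_square algebra_simps)
  qed
  then have "(\<Sum>y\<in>nbrs V E x. (\<sigma> x y * f y - f x)\<^sup>2) =
     (\<Sum>y\<in>nbrs V E x. (f y * f y - f x * f x) - 2 * f x * (\<sigma> x y * f y - f x))"
    by (intro sum.cong) auto
  also have "\<dots> = (\<Sum>y\<in>nbrs V E x. f y * f y - f x * f x) - 2 * f x * (\<Sum>y\<in>nbrs V E x. \<sigma> x y * f y - f x)"
    using sum_subtractf[of "\<lambda>y. f y * f y - f x * f x" "\<lambda>y. 2 * f x * (\<sigma> x y * f y - f x)" "nbrs V E x"]
      sum_distrib_left[of "2 * f x" "\<lambda>y. \<sigma> x y * f y - f x" "nbrs V E x"] by simp
  finally have "(\<Sum>y\<in>nbrs V E x. (\<sigma> x y * f y - f x)\<^sup>2) =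
     (\<Sum>y\<in>nbrs V E x. f y * f y - f x * f x) - 2 * f x * (\<Sum>y\<in>nbrs V E x. \<sigma> x y * f y - f x)" .
  then show ?thesis unfolding sGamma_def sgrad_sq_def lap_def slap_def
    by (simp add: right_diff_distrib)
qed

lemma sum_diff_zero:
  fixes g :: "'a \<Rightarrow> real"
  assumes G: "simple_graph V E"
  shows "(\<Sum>x\<in>V. \<Sum>y\<in>nbrs V E x. g y - g x) = 0"
  using sum_lap_zero[OF G, of g] deg_mult_slap[OF G] unfolding lap_def by simp

lemma sGamma_cong_V:
  assumes G: "simple_graph V E" and x: "x \<in> V" and eq: "\<forall>z\<in>V. g z = h z"
  shows "sGamma V E \<sigma> f g x = sGamma V E \<sigma> f h x"
proof -
  have nb: "\<forall>y\<in>nbrs V E x. y \<in> V" using nbrs_fin[OF G] by auto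
  have "lap V E (\<lambda>z. f z * g z) x = lap V E (\<lambda>z. f z * h z) x"
    unfolding lap_def by (rule slap_cong) (use nb eq x in auto)
  moreover have "slap V E \<sigma> g x = slap V E \<sigma> h x"
    by (rule slap_cong) (use nb eq x in auto)
  ultimately show ?thesis unfolding sGamma_def using eq x by simp
qed

lemma sGamma_scale:
  "sGamma V E \<sigma> f (\<lambda>z. a * f z) x = a * sGamma V E \<sigma> f f x"
proof -
  have "(\<lambda>z. f z * (a * f z)) = (\<lambda>z. a * (f z * f z))" by (auto simp: algebra_simps)
  then show ?thesis unfolding sGamma_def lap_def
    by (simp add: slap_scale algebra_simps)
qed

theorem corollary3p2:
  fixes V :: "'a set" and E :: "'a \<Rightarrow> 'a \<Rightarrow> bool" and \<sigma> :: "'a \<Rightarrow> 'a \<Rightarrow> real"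
    and K :: real and N :: ereal and f :: "'a \<Rightarrow> real" and lam :: real
  assumes "simple_graph V E" and "graph_connected V E" and "signature E \<sigma>"
    and "N > 0" and "CD_sig V E \<sigma> K N"
    and "s_eigenfun V E \<sigma> f lam" and "lam \<noteq> 0"
  shows "\<forall>x\<in>V. \<forall>\<epsilon>>0. sgrad_sq V E \<sigma> f x \<le>
     (((2 + \<epsilon>)\<^sup>2 - 4 * invN N) * lam / \<epsilon> - (4 / \<epsilon> + 2) * K) * (MAX z\<in>V. (f z)\<^sup>2)"
proof (intro ballI allI impI)
  fix x :: 'a and \<epsilon> :: real
  assume xV: "x \<in> V" and ep: "\<epsilon> > 0"
  note G = assms(1) and Sg = assms(3)
  have finV: "finite V" and neV: "V \<noteq> {}" using G by (auto simp: simple_graph_def)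
  have eig: "\<forall>z\<in>V. slap V E \<sigma> f z = - lam * f z" using assms(6) by (auto simp: s_eigenfun_def)
  obtain w where wV: "w \<in> V" and fw: "f w \<noteq> 0" using assms(6) by (auto simp: s_eigenfun_def)
  define iN where "iN = invN N"
  have iN: "iN \<ge> 0"
  proof (cases "N = \<infinity>")
    case True then show ?thesis by (simp add: iN_def invN_def)
  next
    case False
    with assms(4) obtain r where "N = ereal r" "r > 0" by (cases N) auto
    then show ?thesis by (simp add: iN_def invN_def)
  qed
  define \<Gamma> where "\<Gamma> = sGamma V E \<sigma> f f"
  have \<Gamma>_eq: "\<And>z. \<Gamma> z = sgrad_sq V E \<sigma> f z / 2"
    unfolding \<Gamma>_def using sGamma_ff[OF G Sg] by simp
  have \<Gamma>2_eq: "sGamma2 V E \<sigma> f f z = lap V E \<Gamma> z / 2 + lam * \<Gamma> z" if zV: "z \<in> V" for z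
  proof -
    have "sGamma V E \<sigma> f (slap V E \<sigma> f) z = sGamma V E \<sigma> f (\<lambda>z. - lam * f z) z"
      by (rule sGamma_cong_V[OF G zV]) (use eig in auto)
    also have "\<dots> = - lam * \<Gamma> z" unfolding \<Gamma>_def by (rule sGamma_scale)
    finally show ?thesis unfolding sGamma2_def \<Gamma>_def by simp
  qed
  have CD: "sGamma2 V E \<sigma> f f z \<ge> iN * lam\<^sup>2 * (f z)\<^sup>2 + K * \<Gamma> z" if zV: "z \<in> V" for z
  proof -
    have "sGamma2 V E \<sigma> f f z \<ge> iN * (slap V E \<sigma> f z)\<^sup>2 + K * \<Gamma> z"
      using assms(5) zV unfolding CD_sig_def iN_def \<Gamma>_def by blast
    moreover have "(slap V E \<sigma> f z)\<^sup>2 = lam\<^sup>2 * (f z)\<^sup>2" using eig zV by (simp add: power_mult_distrib)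
    ultimately show ?thesis by simp
  qed
  define Sd where "Sd = (\<Sum>z\<in>V. deg V E z * (f z)\<^sup>2)"
  have sq_id: "\<forall>y\<in>nbrs V E z. (\<sigma> z y * f y - f z)\<^sup>2 = (f y * f y - f z * f z) - 2 * f z * (\<sigma> z y * f y - f z)" for z
  proof
    fix y assume "y \<in> nbrs V E z"
    then have "\<sigma> z y = 1 \<or> \<sigma> z y = -1" using Sg unfolding nbrs_def signature_def by blast
    then show "(\<sigma> z y * f y - f z)\<^sup>2 = (f y * f y - f z * f z) - 2 * f z * (\<sigma> z y * f y - f z)"
      by (auto simp: power2_eq_square algebra_simps)
  qed
  have sum_grad: "(\<Sum>z\<in>V. deg V E z * sgrad_sq V E \<sigma> f z) = 2 * lam * Sd"
  proof -
    have "(\<Sum>z\<in>V. deg V E z * sgrad_sq V E \<sigma> f z) = (\<Sum>z\<in>V. \<Sum>y\<in>nbrs V E z. (\<sigma> z y * f y - f z)\<^sup>2)"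
      using deg_mult_sgrad[OF G] by simp
    also have "\<dots> = (\<Sum>z\<in>V. \<Sum>y\<in>nbrs V E z. (f y * f y - f z * f z) - 2 * f z * (\<sigma> z y * f y - f z))"
      using sq_id by (intro sum.cong) auto
    also have "\<dots> = (\<Sum>z\<in>V. \<Sum>y\<in>nbrs V E z. f y * f y - f z * f z) - (\<Sum>z\<in>V. 2 * f z * (\<Sum>y\<in>nbrs V E z. \<sigma> z y * f y - f z))"
    proof -
      have "\<And>z. (\<Sum>y\<in>nbrs V E z. (f y * f y - f z * f z) - 2 * f z * (\<sigma> z y * f y - f z)) = (\<Sum>y\<in>nbrs V E z. f y * f y - f z * f z) - 2 * f z * (\<Sum>y\<in>nbrs V E z. \<sigma> z y * f y - f z)"
      proof -
        fix z
        show "(\<Sum>y\<in>nbrs V E z. (f y * f y - f z * f z) - 2 * f z * (\<sigma> z y * f y - f z)) = (\<Sum>y\<in>nbrs V E z. f y * f y - f z * f z) - 2 * f z * (\<Sum>y\<in>nbrs V E z. \<sigma> z y * f y - f z)"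
          using sum_subtractf[of "\<lambda>y. f y * f y - f z * f z" "\<lambda>y. 2 * f z * (\<sigma> z y * f y - f z)" "nbrs V E z"]
            sum_distrib_left[of "2 * f z" "\<lambda>y. \<sigma> z y * f y - f z" "nbrs V E z"] by simp
      qed
      then show ?thesis
        using sum_subtractf[of "\<lambda>z. \<Sum>y\<in>nbrs V E z. f y * f y - f z * f z" "\<lambda>z. 2 * f z * (\<Sum>y\<in>nbrs V E z. \<sigma> z y * f y - f z)" V]
        by simp
    qed
    also have "(\<Sum>z\<in>V. \<Sum>y\<in>nbrs V E z. f y * f y - f z * f z) = 0"
      using sum_diff_zero[OF G, of "\<lambda>z. f z * f z"] by simp
    also have "(\<Sum>z\<in>V. 2 * f z * (\<Sum>y\<in>nbrs V E z. \<sigma> z y * f y - f z)) = (\<Sum>z\<in>V. 2 * f z * (deg V E z * slap V E \<sigma> f z))"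
      using deg_mult_slap[OF G] by simp
    also have "\<dots> = (\<Sum>z\<in>V. - 2 * lam * (deg V E z * (f z)\<^sup>2))"
      using eig by (intro sum.cong) (auto simp: power2_eq_square)
    finally show ?thesis unfolding Sd_def by (simp add: sum_distrib_left sum_negf)
  qed
  have dw: "deg V E w \<noteq> 0"
  proof
    assume "deg V E w = 0"
    then have "slap V E \<sigma> f w = 0" by (simp add: slap_def)
    then show False using eig wV fw assms(7) by simp
  qed
  have Sd_pos: "Sd > 0"
  proof -
    have "0 < deg V E w * (f w)\<^sup>2" using dw fw deg_nonneg[of V E w] by simp
    also have "\<dots> \<le> Sd" unfolding Sd_def
      by (rule member_le_sum) (use wV finV in \<open>auto intro!: mult_nonneg_nonneg deg_nonneg\<close>)
    finally show ?thesis .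
  qed
  have "0 \<le> (\<Sum>z\<in>V. deg V E z * sgrad_sq V E \<sigma> f z)"
    by (intro sum_nonneg mult_nonneg_nonneg deg_nonneg) (simp add: sgrad_sq_def deg_def sum_nonneg)
  then have "lam \<ge> 0" using sum_grad Sd_pos by (simp add: zero_le_mult_iff)
  then have lam_pos: "lam > 0" using assms(7) by simp
  have lamK: "lam \<ge> iN * lam + K"
  proof -
    have "(\<Sum>z\<in>V. deg V E z * (iN * lam\<^sup>2 * (f z)\<^sup>2 + K * \<Gamma> z)) \<le> (\<Sum>z\<in>V. deg V E z * sGamma2 V E \<sigma> f f z)"
      by (intro sum_mono mult_left_mono CD deg_nonneg)
    also have "(\<Sum>z\<in>V. deg V E z * sGamma2 V E \<sigma> f f z) = (\<Sum>z\<in>V. deg V E z * lap V E \<Gamma> z) / 2 + lam * (\<Sum>z\<in>V. deg V E z * sgrad_sq V E \<sigma> f z) / 2"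
      using \<Gamma>2_eq by (simp add: \<Gamma>_eq sum_distrib_left sum_divide_distrib sum.distrib algebra_simps)
    also have "\<dots> = lam * lam * Sd" using sum_lap_zero[OF G] sum_grad by simp
    also have "(\<Sum>z\<in>V. deg V E z * (iN * lam\<^sup>2 * (f z)\<^sup>2 + K * \<Gamma> z)) = iN * lam\<^sup>2 * Sd + K * ((\<Sum>z\<in>V. deg V E z * sgrad_sq V E \<sigma> f z) / 2)"
      unfolding Sd_def by (simp add: \<Gamma>_eq sum_distrib_left sum_divide_distrib sum.distrib algebra_simps)
    also have "\<dots> = (iN * lam + K) * (lam * Sd)" using sum_grad by (simp add: power2_eq_square algebra_simps)
    finally have "(iN * lam + K) * (lam * Sd) \<le> lam * (lam * Sd)" by simp
    then show ?thesis using lam_pos Sd_pos by simp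
  qed
  define c where "c = lam - K + \<epsilon> * lam / 2"
  have c_pos: "c > 0"
  proof -
    have "iN * lam \<ge> 0" using iN lam_pos by simp
    moreover have "\<epsilon> * lam > 0" using ep lam_pos by simp
    ultimately show ?thesis using lamK unfolding c_def by linarith
  qed
  define H where "H = (\<lambda>z. \<Gamma> z + c * (f z * f z))"
  obtain x0 where x0V: "x0 \<in> V" and x0max: "\<forall>z\<in>V. H z \<le> H x0"
  proof -
    have "Max (H ` V) \<in> H ` V" using finV neV by simp
    then obtain x0 where "x0 \<in> V" "H x0 = Max (H ` V)" by auto
    moreover have "\<forall>z\<in>V. H z \<le> Max (H ` V)" using finV by simp
    ultimately show ?thesis using that by auto
  qed
  have lapH: "lap V E H x0 \<le> 0"
  proof -
    have "(\<Sum>y\<in>nbrs V E x0. H y - H x0) \<le> 0"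
      by (rule sum_nonpos) (use x0max nbrs_fin[OF G] in auto)
    then show ?thesis unfolding lap_def slap_def
      by (simp add: divide_nonpos_nonneg deg_nonneg)
  qed
  have lapH2: "lap V E H x0 = lap V E \<Gamma> x0 + c * lap V E (\<lambda>z. f z * f z) x0"
    unfolding H_def lap_def by (simp add: slap_add slap_scale)
  have lapf2: "lap V E (\<lambda>z. f z * f z) x0 = 2 * \<Gamma> x0 - 2 * lam * (f x0)\<^sup>2"
    using eig x0V unfolding \<Gamma>_def sGamma_def by (simp add: power2_eq_square algebra_simps)
  have lapG: "lap V E \<Gamma> x0 \<ge> 2 * (iN * lam\<^sup>2 * (f x0)\<^sup>2 + K * \<Gamma> x0) - 2 * lam * \<Gamma> x0"
    using CD[OF x0V] \<Gamma>2_eq[OF x0V] by simp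
  have key: "(\<epsilon> * lam / 2) * \<Gamma> x0 \<le> lam * (c - iN * lam) * (f x0)\<^sup>2"
    using lapH lapH2 lapf2 lapG unfolding c_def by (simp add: power2_eq_square algebra_simps)
  have key2: "\<Gamma> x0 \<le> 2 * (c - iN * lam) / \<epsilon> * (f x0)\<^sup>2"
  proof -
    have "(\<epsilon> / 2) * \<Gamma> x0 \<le> (c - iN * lam) * (f x0)\<^sup>2"
      using key lam_pos by (simp add: mult.assoc mult.left_commute[of lam])
    then show ?thesis using ep by (simp add: field_simps)
  qed
  define B where "B = (((2 + \<epsilon>)\<^sup>2 - 4 * iN) * lam / \<epsilon> - (4 / \<epsilon> + 2) * K)"
  have B_eq: "B = 2 * (2 * (c - iN * lam) / \<epsilon> + c)"
  proof -
    define u where "u = 1 / \<epsilon>"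
    have eu: "\<epsilon> * u = 1" using ep unfolding u_def by simp
    have "B = ((2 + \<epsilon>)\<^sup>2 - 4 * iN) * lam * u - (4 * u + 2) * K"
      unfolding B_def u_def by (simp add: divide_inverse)
    moreover have "2 * (2 * (c - iN * lam) / \<epsilon> + c) = 2 * (2 * (c - iN * lam) * u + c)"
      unfolding u_def by (simp add: divide_inverse)
    moreover have "((2 + \<epsilon>)\<^sup>2 - 4 * iN) * lam * u - (4 * u + 2) * K = 2 * (2 * (c - iN * lam) * u + c)"
    proof -
      have "((2 + \<epsilon>)\<^sup>2 - 4 * iN) * lam * u - (4 * u + 2) * K - 2 * (2 * (c - iN * lam) * u + c)
          = (\<epsilon> * u - 1) * (2 * lam + \<epsilon> * lam)"
        unfolding c_def by (simp add: algebra_simps power2_eq_square)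
      then show ?thesis using eu by simp
    qed
    ultimately show ?thesis by simp
  qed
  have B_nn: "B \<ge> 0"
  proof -
    have "\<epsilon> * lam > 0" using ep lam_pos by simp
    then have "c - iN * lam \<ge> 0" using lamK unfolding c_def by linarith
    then show ?thesis unfolding B_eq using c_pos ep by simp
  qed
  define M where "M = (MAX z\<in>V. (f z)\<^sup>2)"
  have M: "(f x0)\<^sup>2 \<le> M" unfolding M_def using finV x0V by simp
  have "sgrad_sq V E \<sigma> f x = 2 * \<Gamma> x" by (simp add: \<Gamma>_eq)
  also have "\<dots> \<le> 2 * H x" unfolding H_def using c_pos by simp
  also have "\<dots> \<le> 2 * H x0" using x0max xV by simp
  also have "\<dots> = 2 * \<Gamma> x0 + 2 * c * (f x0)\<^sup>2" unfolding H_def by (simp add: power2_eq_square)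
  also have "\<dots> \<le> B * (f x0)\<^sup>2"
  proof -
    define q where "q = 2 * (c - iN * lam) / \<epsilon>"
    have "\<Gamma> x0 \<le> q * (f x0)\<^sup>2" using key2 unfolding q_def .
    moreover have "B = 2 * (q + c)" using B_eq unfolding q_def .
    ultimately show ?thesis by (simp add: algebra_simps)
  qed
  also have "\<dots> \<le> B * M" using M B_nn by (simp add: mult_left_mono)
  finally show "sgrad_sq V E \<sigma> f x \<le> (((2 + \<epsilon>)\<^sup>2 - 4 * invN N) * lam / \<epsilon> - (4 / \<epsilon> + 2) * K) * (MAX z\<in>V. (f z)\<^sup>2)"
    unfolding B_def M_def iN_def .
qed

end
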